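(* Let $p$ be a prime and $k$ a positive integer. Then $$\Psi_{p^k}(x)\equiv (x^2+4)^{\varphi(p^k)/2}\pmod p,$$ i.e., the congruence holds coefficientwise in $\mathbb{Z}[x]$ (for $p=2$ and $k=1$ this is to be read as $\Psi_2(x)=x$, the square root of $x^2+4\equiv x^2 \pmod 2$).
   Context: The Fibonacci polynomials are defined by $F_1(x)=1$, $F_2(x)=x$, and $F_n(x)=xF_{n-1}(x)+F_{n-2}(x)$ for $n\geq 3$. For $n\geq 2$, the $n$-th fibotomic polynomial $\Psi_n(x)\in\mathbb{Z}[x]$ is the product of the monic irreducible factors of $F_n(x)$ which are not factors of $F_k(x)$ for any $k<n$; also $\Psi_1(x)=1$. $\varphi$ is Euler's totient function. *)

theory Defs
  imports "HOL-Computational_Algebra.Computational_Algebra" "HOL-Number_Theory.Totient" "HOL-Number_Theory.Cong"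
begin

fun fib_poly :: "nat \<Rightarrow> int poly" where
  "fib_poly 0 = 0"
| "fib_poly (Suc 0) = 1"
| "fib_poly (Suc (Suc n)) = [:0, 1:] * fib_poly (Suc n) + fib_poly n"

definition fibotomic :: "nat \<Rightarrow> int poly" where
  "fibotomic n = (if n \<le> 1 then 1 else
     \<Prod>{q :: int poly. irreducible q \<and> lead_coeff q = 1 \<and> q dvd fib_poly n \<and>
                       (\<forall>k. 1 \<le> k \<and> k < n \<longrightarrow> \<not> q dvd fib_poly k)})"

end

theory Submission
  imports Defs
begin


abbreviation F where "F \<equiv> fib_poly"

lemma F_rec: "F (n+2) = [:0,1:] * F (n+1) + F n"
  by (simp add: numeral_2_eq_2)

lemma F_add: "F (m + n + 1) = F (m+1) * F (n+1) + F m * F n"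
proof (induction m arbitrary: n)
  case 0 then show ?case by simp
next
  case (Suc m)
  have "F (Suc m + n + 1) = F (m + (n+1) + 1)" by simp
  also have "\<dots> = F (m+1) * F (n+2) + F m * F (n+1)" using Suc[of "n+1"] by simp
  also have "\<dots> = F (m+2) * F (n+1) + F (m+1) * F n"
    by (simp add: F_rec[of n] F_rec[of m] algebra_simps)
  finally show ?case by simp
qed

lemma cassini: "F (n+1)^2 - F (n+2) * F n = (-1)^n"
proof (induction n)
  case 0 then show ?case by simp
next
  case (Suc n)
  have "F (n+2)^2 - F (n+3) * F (n+1) = F (n+2)^2 - ([:0,1:] * F (n+2) + F (n+1)) * F (n+1)"
    using F_rec[of "n+1"] by (simp add: numeral_3_eq_3)
  also have "\<dots> = F (n+2) * F n - F (n+1)^2"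
    by (simp add: F_rec[of n] algebra_simps power2_eq_square)
  also have "\<dots> = (-1)^(Suc n)" using Suc by (simp add: algebra_simps)
  finally show ?case by (simp add: numeral_3_eq_3)
qed

lemma common_dvd_unit: "q dvd F (n+1) \<Longrightarrow> q dvd F n \<Longrightarrow> is_unit q"
proof -
  assume a: "q dvd F (n+1)" "q dvd F n"
  have "q dvd F (n+1)^2 - F (n+2) * F n" using a by (simp add: power2_eq_square)
  then have "q dvd (-1)^n" using cassini by simp
  moreover have "is_unit ((-1::int poly)^n)" by (simp add: is_unit_power_iff)
  ultimately show ?thesis using dvd_unit_imp_unit by blast
qed

lemma F_deg_lead: "degree (F (n+1)) = n \<and> lead_coeff (F (n+1)) = 1"
proof (induction n rule: nat_less_induct)
  case (1 n)
  show ?case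
  proof (cases n)
    case 0 then show ?thesis by simp
  next
    case (Suc m)
    show ?thesis
    proof (cases m)
      case 0 then show ?thesis using Suc by (simp add: numeral_2_eq_2)
    next
      case (Suc l)
      have h1: "degree (F (m+1)) = m" "lead_coeff (F (m+1)) = 1" using 1 \<open>n = Suc m\<close> by auto
      have h2: "degree (F (l+1)) = l" using 1 \<open>n = Suc m\<close> Suc by auto
      have nz: "F (m+1) \<noteq> 0" using h1 by auto
      have dx: "degree ([:0,1:] * F (m+1)) = m + 1" using nz h1 by (simp add: degree_mult_eq)
      have eq: "F (n+1) = [:0,1:] * F (m+1) + F (l+1)" using \<open>n = Suc m\<close> Suc F_rec[of "l+1"] by simp
      have d: "degree (F (n+1)) = m+1" unfolding eq using dx h2 Suc by (subst degree_add_eq_left) auto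
      have "lead_coeff (F (n+1)) = coeff ([:0,1:] * F (m+1)) (m+1) + coeff (F (l+1)) (m+1)"
        using d eq by simp
      also have "coeff (F (l+1)) (m+1) = 0" using h2 Suc by (simp add: coeff_eq_0)
      also have "coeff ([:0,1:] * F (m+1)) (m+1) = 1" using h1 by (simp add: mult_pCons_left)
      finally show ?thesis using d \<open>n = Suc m\<close> by simp
    qed
  qed
qed

lemma F_nz: "n \<ge> 1 \<Longrightarrow> F n \<noteq> 0"
  using F_deg_lead[of "n-1"] by (cases n) auto

lemma F_lead: "n \<ge> 1 \<Longrightarrow> lead_coeff (F n) = 1"
  using F_deg_lead[of "n-1"] by (cases n) auto

lemma F_dvd_mult: "F m dvd F (m * t)"
proof (induction t)
  case 0 then show ?case by simp
next
  case (Suc t)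
  show ?case
  proof (cases m)
    case 0 then show ?thesis by simp
  next
    case (Suc l)
    have "F (m * Suc t) = F (m*t + l + 1)" using Suc by (simp add: algebra_simps)
    also have "\<dots> = F (m*t+1) * F (l+1) + F (m*t) * F l" by (rule F_add)
    finally show ?thesis using Suc \<open>F m dvd F (m*t)\<close> by simp
  qed
qed

lemma F_dvd: "m dvd n \<Longrightarrow> F m dvd F n"
  using F_dvd_mult by (auto elim!: dvdE)



lemma F_mod_step:
  assumes q: "prime_elem q" and "q dvd F n" "q dvd F m"
  shows "q dvd F (m mod n)"
proof -
  define t r where "t = m div n" and "r = m mod n"
  have m: "m = n * t + r" unfolding t_def r_def by simp
  show ?thesis
  proof (cases "r = 0")
    case True then show ?thesis using r_def by simp
  next
    case False
    have qnt: "q dvd F (n*t)" using F_dvd_mult[of n t] assms(2) dvd_trans by blast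
    have "F m = F (n*t + (r-1) + 1)" using m False by simp
    also have "\<dots> = F (n*t+1) * F (r-1+1) + F (n*t) * F (r-1)" by (rule F_add)
    finally have "F (n*t+1) * F r = F m - F (n*t) * F (r-1)" using False by simp
    moreover have "q dvd F m - F (n*t) * F (r-1)" using qnt assms(3) by (simp add: dvd_diff)
    ultimately have "q dvd F (n*t+1) * F r" by simp
    moreover have "\<not> q dvd F (n*t+1)"
      using common_dvd_unit[of q "n*t"] qnt q prime_elem_not_unit by blast
    ultimately show ?thesis using q prime_elem_dvd_mult_iff r_def by blast
  qed
qed

lemma F_gcd:
  assumes q: "prime_elem q"
  shows "q dvd F m \<Longrightarrow> q dvd F n \<Longrightarrow> q dvd F (gcd m n)"
proof (induction m n rule: gcd_nat_induct)
  case (step m n)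
  have "q dvd F (m mod n)" using F_mod_step[OF q step(4) step(3)] .
  then have "q dvd F (gcd n (m mod n))" using step by blast
  then show ?case by (metis gcd.commute gcd_red_nat)
qed simp

lemma F_deriv_pair:
  "[:4,0,1:] * pderiv (F (n+1)) = of_nat n * [:0,1:] * F (n+1) + (2 * of_nat n + 2) * F n \<and>
   [:4,0,1:] * pderiv (F (n+2)) = (of_nat n + 1) * [:0,1:] * F (n+2) + (2 * of_nat n + 4) * F (n+1)"
proof (induction n)
  case 0
  have "[:4,0,1:] = [:0,1:] * [:0,1:] + (4::int poly)"
    by (rule poly_eqI) (simp add: mult_pCons_left coeff_pCons numeral_poly split: nat.split)
  then show ?case by (simp add: numeral_2_eq_2 pderiv_pCons)
next
  case (Suc n)
  have h1: "[:4,0,1:] * pderiv (F (n+1)) = of_nat n * [:0,1:] * F (n+1) + (2 * of_nat n + 2) * F n"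
    and h2: "[:4,0,1:] * pderiv (F (n+2)) = (of_nat n + 1) * [:0,1:] * F (n+2) + (2 * of_nat n + 4) * F (n+1)"
    using Suc by auto
  have r1: "F (n+2) = [:0,1:] * F (n+1) + F n" by (rule F_rec)
  have r2: "F (n+3) = [:0,1:] * F (n+2) + F (n+1)" using F_rec[of "n+1"] by (simp add: numeral_3_eq_3)
  have d: "pderiv (F (n+3)) = F (n+2) + [:0,1:] * pderiv (F (n+2)) + pderiv (F (n+1))"
    unfolding r2 by (simp add: pderiv_add pderiv_mult pderiv_pCons algebra_simps)
  have D: "[:4,0,1:] = [:0,1:] * [:0,1:] + (4::int poly)"
    by (rule poly_eqI) (simp add: mult_pCons_left coeff_pCons numeral_poly split: nat.split)
  have "[:4,0,1:] * pderiv (F (n+3)) = (of_nat n + 2) * [:0,1:] * F (n+3) + (2 * of_nat n + 6) * F (n+2)"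
    unfolding d using h1 h2 r1 r2 D by algebra
  then show ?case using h2 by (simp add: numeral_3_eq_3 algebra_simps)
qed

lemma F_deriv: "[:4,0,1:] * pderiv (F (n+1)) = of_nat n * [:0,1:] * F (n+1) + (2 * of_nat n + 2) * F n"
  using F_deriv_pair by blast

lemma dvd_F_deg0_unit:
  assumes "q dvd F (n+1)" "degree q = 0" shows "is_unit q"
proof -
  obtain r where r: "F (n+1) = q * r" using assms by (auto elim: dvdE)
  have "lead_coeff q * lead_coeff r = 1" using F_lead[of "n+1"] r by (simp add: lead_coeff_mult)
  then have "is_unit (lead_coeff q)" by (metis dvd_triv_left)
  moreover have "q = [:lead_coeff q:]" using assms(2) by (metis leading_coeff_0_iff degree_0_id)
  ultimately show ?thesis by (metis is_unit_const_poly_iff)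
qed

lemma F_sqfree:
  assumes q: "prime_elem q" and sq: "q^2 dvd F (n+1)"
  shows False
proof -
  obtain r where r: "F (n+1) = q * q * r" using sq by (auto simp: power2_eq_square elim: dvdE)
  have qF: "q dvd F (n+1)" using r by simp
  have "pderiv (F (n+1)) = q * (q * pderiv r + r * pderiv q + r * pderiv q)"
    unfolding r by (simp add: pderiv_mult algebra_simps)
  then have "q dvd pderiv (F (n+1))" by simp
  then have "q dvd [:4,0,1:] * pderiv (F (n+1))" by (rule dvd_mult)
  then have "q dvd of_nat n * [:0,1:] * F (n+1) + (2 * of_nat n + 2) * F n" by (simp only: F_deriv)
  moreover have "q dvd of_nat n * [:0,1:] * F (n+1)" using qF by (rule dvd_mult)
  ultimately have "q dvd (2 * of_nat n + 2) * F n" by (simp add: dvd_add_right_iff)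
  moreover have "(2 * of_nat n + 2 :: int poly) = [:2 * int n + 2:]"
    by (simp add: of_nat_poly numeral_poly)
  ultimately have "q dvd [:2 * int n + 2:] * F n" by simp
  then have "q dvd [:2 * int n + 2:] \<or> q dvd F n" using q prime_elem_dvd_mult_iff by blast
  then show False
  proof
    assume "q dvd [:2 * int n + 2:]"
    then have "degree q = 0" using dvd_imp_degree_le[of q "[:2 * int n + 2:]"] by simp
    then show False using dvd_F_deg0_unit qF q prime_elem_not_unit by blast
  next
    assume "q dvd F n"
    then show False using common_dvd_unit qF q prime_elem_not_unit by blast
  qed
qed



lemma normalize_monic: "lead_coeff (q::int poly) = 1 \<Longrightarrow> normalize q = q"
  by (simp add: normalize_poly_def flip: one_pCons)

lemma monic_prime_iff:
  fixes q A :: "int poly"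
  assumes "lead_coeff A = 1" "q dvd A"
  shows "(irreducible q \<and> lead_coeff q = 1) \<longleftrightarrow> prime q"
proof
  assume "irreducible q \<and> lead_coeff q = 1"
  then show "prime q" using irreducible_imp_prime_elem normalize_monic by (auto simp: prime_def)
next
  assume p: "prime q"
  obtain r where r: "A = q * r" using assms by (auto elim: dvdE)
  have "lead_coeff q * lead_coeff r = 1" using assms r by (simp add: lead_coeff_mult)
  then have u: "lead_coeff q = 1 \<or> lead_coeff q = -1" using zmult_eq_1_iff by blast
  have "q \<noteq> 0" using p by auto
  have "unit_factor q * normalize q = q" by (rule unit_factor_mult_normalize)
  then have "unit_factor q * q = q" using p by (metis prime_def)
  then have "unit_factor q = 1" using \<open>q \<noteq> 0\<close> by simp
  then have "[:sgn (lead_coeff q):] = 1" by (simp add: unit_factor_poly_def)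
  then have "coeff [:sgn (lead_coeff q):] 0 = coeff 1 0" by simp
  then have "lead_coeff q = 1" using u by auto
  then show "irreducible q \<and> lead_coeff q = 1" using p prime_elem_imp_irreducible by auto
qed

lemma sqfree_prod:
  fixes A :: "int poly"
  assumes A0: "A \<noteq> 0" and lA: "lead_coeff A = 1" and sq: "\<forall>q. prime_elem q \<longrightarrow> \<not> q^2 dvd A"
  shows "\<Prod>(prime_factors A) = A"
proof -
  have "normalize (prod_mset (prime_factorization A)) = normalize A"
    by (rule prod_mset_prime_factorization_weak[OF A0])
  also have "normalize A = A" using lA normalize_monic by blast
  also have "prod_mset (prime_factorization A) = (\<Prod>q\<in>prime_factors A. q ^ count (prime_factorization A) q)"
    by (subst prod_mset_multiplicity) simp_all
  also have "\<dots> = (\<Prod>q\<in>prime_factors A. q)"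
  proof (rule prod.cong)
    fix q assume q: "q \<in> prime_factors A"
    then have pq: "prime q" "q dvd A" using in_prime_factors_iff by auto
    have "multiplicity q A > 0" using pq A0 prime_multiplicity_gt_zero_iff by blast
    moreover have "\<not> 2 \<le> multiplicity q A"
      using sq pq power_dvd_iff_le_multiplicity[where p=q and n=2 and x=A] by auto
    ultimately have "multiplicity q A = 1" by linarith
    then show "q ^ count (prime_factorization A) q = q" using count_prime_factorization_prime[OF pq(1), of A] by simp
  qed simp
  also have "normalize (\<Prod>q\<in>prime_factors A. q) = (\<Prod>q\<in>prime_factors A. q)"
  proof (rule normalize_monic)
    have "\<forall>q\<in>prime_factors A. lead_coeff q = 1"
      using monic_prime_iff[OF lA] by (auto simp: in_prime_factors_iff)
    then show "lead_coeff (\<Prod>q\<in>prime_factors A. q) = 1" by (simp add: lead_coeff_prod)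
  qed
  finally show ?thesis .
qed

lemma prod_lemma:
  fixes A B :: "int poly"
  assumes A0: "A \<noteq> 0" and lA: "lead_coeff A = 1" and lB: "lead_coeff B = 1" and BA: "B dvd A"
    and sq: "\<forall>q. prime_elem q \<longrightarrow> \<not> q^2 dvd A"
  shows "\<Prod>{q. irreducible q \<and> lead_coeff q = 1 \<and> q dvd A \<and> \<not> q dvd B} * B = A"
proof -
  have B0: "B \<noteq> 0" using lB by auto
  have sqB: "\<forall>q. prime_elem q \<longrightarrow> \<not> q^2 dvd B" using sq BA dvd_trans by blast
  have S: "{q. irreducible q \<and> lead_coeff q = 1 \<and> q dvd A \<and> \<not> q dvd B} = prime_factors A - prime_factors B"
  proof (rule set_eqI)
    fix q
    show "q \<in> {q. irreducible q \<and> lead_coeff q = 1 \<and> q dvd A \<and> \<not> q dvd B} \<longleftrightarrow> q \<in> prime_factors A - prime_factors B"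
      using monic_prime_iff[OF lA, of q] A0 B0 by (auto simp: in_prime_factors_iff)
  qed
  have sub: "prime_factors B \<subseteq> prime_factors A" using dvd_prime_factors[OF A0 BA] .
  have "\<Prod>(prime_factors A) = \<Prod>(prime_factors A - prime_factors B) * \<Prod>(prime_factors B)"
    using sub by (simp add: prod.subset_diff)
  then show ?thesis using S sqfree_prod[OF A0 lA sq] sqfree_prod[OF B0 lB sqB] by simp
qed

lemma fibotomic_prime_power:
  fixes p k :: nat
  assumes p: "prime p" and k: "k \<ge> 1"
  shows "fibotomic (p^k) * F (p^(k-1)) = F (p^k)"
proof -
  have p1: "p > 1" using p prime_gt_1_nat by blast
  have n2: "p^k > 1" using one_less_power[of p k] p1 k by simp
  have lt: "p^(k-1) < p^k" using p1 k by simp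
  have ge1: "p^(k-1) \<ge> 1" using p1 by simp
  let ?A = "F (p^k)" and ?B = "F (p^(k-1))"
  have S: "{q. irreducible q \<and> lead_coeff q = 1 \<and> q dvd ?A \<and> (\<forall>j. 1 \<le> j \<and> j < p^k \<longrightarrow> \<not> q dvd F j)}
         = {q. irreducible q \<and> lead_coeff q = 1 \<and> q dvd ?A \<and> \<not> q dvd ?B}"
  proof (rule set_eqI, rule iffI)
    fix q assume "q \<in> {q. irreducible q \<and> lead_coeff q = 1 \<and> q dvd ?A \<and> (\<forall>j. 1 \<le> j \<and> j < p^k \<longrightarrow> \<not> q dvd F j)}"
    then show "q \<in> {q. irreducible q \<and> lead_coeff q = 1 \<and> q dvd ?A \<and> \<not> q dvd ?B}"
      using lt ge1 by auto
  next
    fix q assume q: "q \<in> {q. irreducible q \<and> lead_coeff q = 1 \<and> q dvd ?A \<and> \<not> q dvd ?B}"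
    then have pq: "prime_elem q" using irreducible_imp_prime_elem by auto
    have "\<forall>j. 1 \<le> j \<and> j < p^k \<longrightarrow> \<not> q dvd F j"
    proof (intro allI impI notI)
      fix j assume j0: "1 \<le> j \<and> j < p^k" and j3: "q dvd F j"
      have j: "1 \<le> j" "j < p^k" "q dvd F j" using j0 j3 by auto
      have qg: "q dvd F (gcd j (p^k))" using F_gcd[OF pq j(3)] q by auto
      have "gcd j (p^k) dvd p^k" by simp
      then obtain i where i: "i \<le> k" "gcd j (p^k) = p^i" using divides_primepow_nat[OF p] by blast
      have "gcd j (p^k) \<le> j" using j(1) by (simp add: gcd_le1_nat)
      then have "p^i < p^k" using i j by simp
      then have "i < k" using p1 by (simp add: power_strict_increasing_iff)
      then have "p^i dvd p^(k-1)" by (simp add: le_imp_power_dvd)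
      then have "F (p^i) dvd ?B" by (rule F_dvd)
      then show False using qg i q dvd_trans by auto
    qed
    then show "q \<in> {q. irreducible q \<and> lead_coeff q = 1 \<and> q dvd ?A \<and> (\<forall>j. 1 \<le> j \<and> j < p^k \<longrightarrow> \<not> q dvd F j)}"
      using q by auto
  qed
  have A0: "?A \<noteq> 0" using F_nz n2 by simp
  have sq: "\<forall>q. prime_elem q \<longrightarrow> \<not> q^2 dvd ?A"
  proof (intro allI impI notI)
    fix q assume "prime_elem q" "q^2 dvd ?A"
    moreover have "p^k - 1 + 1 = p^k" using n2 by simp
    ultimately show False using F_sqfree[of q "p^k - 1"] by simp
  qed
  have "fibotomic (p^k) = \<Prod>{q. irreducible q \<and> lead_coeff q = 1 \<and> q dvd ?A \<and> (\<forall>j. 1 \<le> j \<and> j < p^k \<longrightarrow> \<not> q dvd F j)}"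
    using n2 by (simp add: fibotomic_def)
  also note S
  finally show ?thesis
    using prod_lemma[OF A0 F_lead F_lead F_dvd] n2 ge1 sq lt k p1
    by (simp add: le_imp_power_dvd)
qed



definition Dp :: "int poly" where "Dp = [:4,0,1:]"

datatype qe = QE (re: "int poly") (im: "int poly")

instantiation qe :: comm_ring_1
begin
definition "0 = QE 0 0"
definition "1 = QE 1 0"
definition "a + b = QE (re a + re b) (im a + im b)"
definition "a - b = QE (re a - re b) (im a - im b)"
definition "- a = QE (- re a) (- im a)"
definition "a * b = QE (re a * re b + Dp * im a * im b) (re a * im b + im a * re b)"
instance
  by standard (auto simp: zero_qe_def one_qe_def plus_qe_def minus_qe_def uminus_qe_def times_qe_def
      algebra_simps intro: qe.expand)
end

lemma re_add[simp]: "re (a + b) = re a + re b" and im_add[simp]: "im (a + b) = im a + im b"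
  and re_diff[simp]: "re (a - b) = re a - re b" and im_diff[simp]: "im (a - b) = im a - im b"
  and re_mult[simp]: "re (a * b) = re a * re b + Dp * im a * im b"
  and im_mult[simp]: "im (a * b) = re a * im b + im a * re b"
  and re_one[simp]: "re 1 = 1" and im_one[simp]: "im 1 = 0"
  and re_zero[simp]: "re 0 = 0" and im_zero[simp]: "im 0 = 0"
  by (simp_all add: zero_qe_def one_qe_def plus_qe_def minus_qe_def times_qe_def)

lemma of_nat_qe: "(of_nat n :: qe) = QE (of_nat n) 0"
  by (induction n) (auto simp: zero_qe_def one_qe_def plus_qe_def)

definition pc :: "nat \<Rightarrow> 'a::comm_ring_1 \<Rightarrow> 'a \<Rightarrow> bool" where
  "pc p u v \<longleftrightarrow> (\<exists>w. u - v = of_nat p * w)"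

lemma pc_refl: "pc p u u" unfolding pc_def by (rule exI[of _ 0]) simp

lemma pc_sym: "pc p u v \<Longrightarrow> pc p v u"
proof -
  assume "pc p u v" then obtain w where w: "u - v = of_nat p * w" unfolding pc_def by blast
  have "v - u = - (u - v)" by simp
  also have "\<dots> = of_nat p * (- w)" using w by simp
  finally show ?thesis unfolding pc_def by blast
qed

lemma pc_trans: "pc p u v \<Longrightarrow> pc p v w \<Longrightarrow> pc p u w"
proof -
  assume "pc p u v" "pc p v w"
  then obtain a b where a: "u - v = of_nat p * a" and b: "v - w = of_nat p * b" unfolding pc_def by blast
  have "u - w = (u - v) + (v - w)" by simp
  also have "\<dots> = of_nat p * (a + b)" using a b by (simp add: distrib_left)
  finally show ?thesis unfolding pc_def by blast
qed

lemma pc_add: "pc p u v \<Longrightarrow> pc p u' v' \<Longrightarrow> pc p (u + u') (v + v')"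
proof -
  assume "pc p u v" "pc p u' v'"
  then obtain a b where a: "u - v = of_nat p * a" and b: "u' - v' = of_nat p * b" unfolding pc_def by blast
  have "(u + u') - (v + v') = (u - v) + (u' - v')" by simp
  also have "\<dots> = of_nat p * (a + b)" using a b by (simp add: distrib_left)
  finally show ?thesis unfolding pc_def by blast
qed

lemma pc_multiple: "pc p (of_nat p * w) 0"
  unfolding pc_def by auto

lemma pc_mult_left: "pc p u v \<Longrightarrow> pc p (c * u) (c * v)"
proof -
  assume "pc p u v"
  then obtain a where a: "u - v = of_nat p * a" unfolding pc_def by blast
  have "c * u - c * v = c * (u - v)" by (simp add: right_diff_distrib)
  also have "\<dots> = of_nat p * (c * a)" using a by (simp add: mult.left_commute)
  finally show ?thesis unfolding pc_def by blast
qed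

lemma pc_mult: "pc p u v \<Longrightarrow> pc p u' v' \<Longrightarrow> pc p (u * u') (v * v')"
proof -
  assume a: "pc p u v" "pc p u' v'"
  have "pc p (u * u') (v * u')" using pc_mult_left[OF a(1), of u'] by (simp add: mult.commute)
  moreover have "pc p (v * u') (v * v')" using pc_mult_left[OF a(2)] .
  ultimately show ?thesis by (rule pc_trans)
qed

lemma pc_power: "pc p u v \<Longrightarrow> pc p (u ^ n) (v ^ n)"
  by (induction n) (auto simp: pc_refl pc_mult)



definition aa :: qe where "aa = QE [:0,1:] 1"
definition XX :: qe where "XX = QE [:0,1:] 0"
definition SS :: qe where "SS = QE 0 1"

lemma Dp_eq: "Dp = [:0,1:] * [:0,1:] + [:4:]"
  unfolding Dp_def by (rule poly_eqI) (simp add: mult_pCons_left coeff_pCons split: nat.split)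

lemma aa_sq: "aa^2 = QE (smult 2 [:0,1:]) 0 * aa + QE [:4:] 0"
  by (rule qe.expand) (simp add: aa_def power2_eq_square Dp_eq mult_pCons_left)

lemma im_cmult[simp]: "im (QE c 0 * b) = c * im b"
  by simp

lemma im_aa_pair: "im (aa^(n+1)) = smult (2^n) (F (n+1)) \<and> im (aa^(n+2)) = smult (2^(n+1)) (F (n+2))"
proof (induction n)
  case 0
  show ?case by (simp add: aa_def power2_eq_square numeral_2_eq_2)
next
  case (Suc n)
  have "aa^(n+3) = aa^(n+1) * aa^2" by (simp add: power_add[symmetric] numeral_3_eq_3 numeral_2_eq_2)
  also have "\<dots> = aa^(n+1) * (QE (smult 2 [:0,1:]) 0 * aa + QE [:4:] 0)" by (simp only: aa_sq)
  also have "\<dots> = QE (smult 2 [:0,1:]) 0 * (aa^(n+1) * aa) + QE [:4:] 0 * aa^(n+1)"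
    by (simp add: distrib_left ac_simps)
  also have "aa^(n+1) * aa = aa^(n+2)" by (simp add: numeral_2_eq_2)
  finally have "im (aa^(n+3)) = smult 2 [:0,1:] * im (aa^(n+2)) + [:4:] * im (aa^(n+1))" by simp
  also have "\<dots> = smult 2 [:0,1:] * smult (2^(n+1)) (F (n+2)) + [:4:] * smult (2^n) (F (n+1))"
    using Suc by (simp only:)
  also have "\<dots> = smult (2^(n+2)) ([:0,1:] * F (n+2) + F (n+1))"
  proof -
    have a: "smult 2 [:0,1:] * smult (2^(n+1)) (F (n+2)) = smult (2^(n+2)) ([:0,1:] * F (n+2))"
      by (simp only: mult_smult_left mult_smult_right smult_smult power_add) (simp add: mult.commute)
    have b: "[:4:] * smult (2^n) (F (n+1)) = smult (2^(n+2)) (F (n+1))"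
      by (simp only: mult_smult_right smult_smult power_add) (simp add: mult.commute mult_pCons_left)
    show ?thesis unfolding a b by (simp add: smult_add_right)
  qed
  also have "[:0,1:] * F (n+2) + F (n+1) = F (n+3)" using F_rec[of "n+1"] by (simp add: numeral_3_eq_3)
  finally have c: "im (aa^(n+3)) = smult (2^(n+2)) (F (n+3))" .
  have h2: "im (aa^(n+2)) = smult (2^(n+1)) (F (n+2))" using Suc by blast
  show ?case using c h2 by (simp add: numeral_3_eq_3 numeral_2_eq_2 del: power_Suc)
qed

lemma im_aa_pow: "im (aa^(n+1)) = smult (2^n) (F (n+1))"
  using im_aa_pair by blast

lemma XX_pow: "XX^n = QE ([:0,1:]^n) 0"
  by (induction n) (auto intro: qe.expand simp: XX_def)

lemma SS_pow: "SS^(2*m+1) = QE 0 (Dp^m)"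
proof (induction m)
  case 0 then show ?case by (simp add: SS_def)
next
  case (Suc m)
  have "SS^(2*Suc m+1) = SS^(2*m+1) * (SS * SS)" by (simp add: algebra_simps power_add[symmetric])
  then show ?case using Suc by (auto intro: qe.expand simp: SS_def)
qed

lemma pc_im: "pc p u v \<Longrightarrow> pc p (im u) (im v)"
proof -
  assume "pc p u v"
  then obtain w where w: "u - v = of_nat p * w" unfolding pc_def by blast
  have "im u - im v = im (u - v)" by simp
  also have "\<dots> = of_nat p * im w" using w by (simp add: of_nat_qe)
  finally show ?thesis unfolding pc_def by blast
qed

lemma frob:
  fixes u v :: "'a::comm_ring_1"
  assumes p: "prime p"
  shows "pc p ((u + v) ^ p) (u ^ p + v ^ p)"
proof -
  define g where "g k = (if k = 0 \<or> k = p then 0 else of_nat ((p choose k) div p) * u^k * v^(p-k))" for k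
  have p0: "p \<noteq> 0" using p by auto
  have "(u + v) ^ p = (\<Sum>k\<le>p. of_nat (p choose k) * u^k * v^(p-k))" by (rule binomial_ring)
  also have "\<dots> = (\<Sum>k\<le>p. of_nat p * g k + (if k = 0 then v^p else 0) + (if k = p then u^p else 0))"
  proof (rule sum.cong)
    fix k assume k: "k \<in> {..p}"
    show "of_nat (p choose k) * u^k * v^(p-k) = of_nat p * g k + (if k = 0 then v^p else 0) + (if k = p then u^p else 0)"
    proof (cases "k = 0 \<or> k = p")
      case True then show ?thesis using p0 by (auto simp: g_def)
    next
      case False
      then have "p dvd (p choose k)" using k p0 p by (intro dvd_choose_prime) auto
      then have "(p choose k) = p * ((p choose k) div p)" by simp
      then have "(of_nat (p choose k) :: 'a) = of_nat p * of_nat ((p choose k) div p)"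
        by (metis of_nat_mult)
      then show ?thesis using False by (simp add: g_def mult.assoc)
    qed
  qed simp
  also have "\<dots> = of_nat p * (\<Sum>k\<le>p. g k) + v^p + u^p"
    using p0 by (simp add: sum.distrib sum_distrib_left)
  finally have "(u + v) ^ p - (u ^ p + v ^ p) = of_nat p * (\<Sum>k\<le>p. g k)" by (simp add: algebra_simps)
  then show ?thesis unfolding pc_def by blast
qed

lemma aa_frob:
  assumes p: "prime p"
  shows "pc p (aa^(p^k)) (XX^(p^k) + SS^(p^k))"
proof (induction k)
  case 0
  have "aa = XX + SS" by (rule qe.expand) (simp add: aa_def XX_def SS_def)
  then show ?case by (simp add: pc_refl)
next
  case (Suc k)
  have "pc p ((aa^(p^k))^p) ((XX^(p^k) + SS^(p^k))^p)" using Suc by (rule pc_power)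
  moreover have "pc p ((XX^(p^k) + SS^(p^k))^p) ((XX^(p^k))^p + (SS^(p^k))^p)" using p by (rule frob)
  ultimately have "pc p ((aa^(p^k))^p) ((XX^(p^k))^p + (SS^(p^k))^p)" by (rule pc_trans)
  then show ?case by (simp add: power_mult[symmetric] mult.commute)
qed

lemma two_pow_pc:
  assumes p: "prime p"
  shows "pc p ((2::int)^(p^k)) 2"
proof (induction k)
  case 0 then show ?case by (simp add: pc_refl)
next
  case (Suc k)
  have "pc p (((2::int)^(p^k))^p) (2^p)" using Suc by (rule pc_power)
  moreover have "pc p ((1 + 1::int)^p) (1^p + 1^p)" using p by (rule frob)
  ultimately have "pc p (((2::int)^(p^k))^p) 2" by (simp add: pc_trans)
  then show ?case by (simp add: power_mult[symmetric] mult.commute)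
qed

lemma two_pow_cong:
  assumes p: "prime p" "odd p"
  shows "int p dvd 2^(p^k - 1) - 1"
proof -
  have "p^k \<ge> 1" using p prime_ge_1_nat by simp
  then have e: "(2::int)^(p^k) = 2 * 2^(p^k - 1)" by (metis One_nat_def Suc_diff_le diff_Suc_Suc minus_nat.diff_0 power_Suc)
  obtain w where "(2::int)^(p^k) - 2 = int p * w" using two_pow_pc[OF p(1), of k] unfolding pc_def by auto
  then have "int p dvd 2 * (2^(p^k - 1) - 1)" unfolding e by (simp add: right_diff_distrib)
  moreover have "prime (int p)" using p by simp
  moreover have "\<not> int p dvd 2"
  proof
    assume "int p dvd 2"
    then have "p dvd 2" by presburger
    then have "p \<le> 2" by (simp add: dvd_imp_le)
    then show False using p prime_ge_2_nat[OF p(1)] by (metis dual_order.antisym even_numeral)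
  qed
  ultimately show ?thesis using prime_dvd_mult_iff by blast
qed

lemma F_odd_cong:
  assumes p: "prime p" "odd p"
  shows "pc p (F (p^k)) (Dp^((p^k - 1) div 2))"
proof -
  define N where "N = p^k"
  define m where "m = (N - 1) div 2"
  have oN: "odd N" using p by (simp add: N_def)
  then have N: "N = 2*m + 1" unfolding m_def by presburger
  have "pc p (aa^N) (XX^N + SS^N)" using aa_frob[OF p(1)] by (simp add: N_def)
  then have "pc p (im (aa^N)) (im (XX^N + SS^N))" by (rule pc_im)
  moreover have "im (aa^N) = smult (2^(N-1)) (F N)" using im_aa_pow[of "2*m"] N by simp
  moreover have "SS^N = QE 0 (Dp^m)" using N SS_pow by simp
  moreover have "im (XX^N) = 0" by (simp add: XX_pow)
  ultimately have c1: "pc p (smult (2^(N-1)) (F N)) (im (XX^N) + im (SS^N))" by simp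
  then have c1: "pc p (smult (2^(N-1)) (F N)) (Dp^m)" using \<open>SS^N = QE 0 (Dp^m)\<close> \<open>im (XX^N) = 0\<close> by simp
  obtain c where c: "2^(N-1) - 1 = int p * c" using two_pow_cong[OF p, of k] by (auto simp: N_def elim: dvdE)
  have "smult (2^(N-1)) (F N) - F N = smult (2^(N-1) - 1) (F N)" by (simp add: smult_diff_left)
  also have "\<dots> = of_nat p * smult c (F N)" using c by (simp add: of_nat_poly mult.commute)
  finally have "pc p (smult (2^(N-1)) (F N)) (F N)" unfolding pc_def by blast
  then have "pc p (F N) (smult (2^(N-1)) (F N))" by (rule pc_sym)
  then have "pc p (F N) (Dp^m)" using c1 by (rule pc_trans)
  then show ?thesis by (simp add: N_def m_def)
qed



lemma pc_poly_iff: "pc p (u::int poly) v \<longleftrightarrow> [:int p:] dvd u - v"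
  unfolding pc_def dvd_def by (simp add: of_nat_poly)

lemma F_double: "pc 2 (F (2*m)) ([:0,1:] * F m ^ 2)"
proof (cases m)
  case 0 then show ?thesis by (simp add: pc_refl)
next
  case (Suc l)
  have e: "2*m = l + (l+1) + 1" using Suc by simp
  have "F (2*m) = F (l + (l+1) + 1)" by (simp only: e)
  also have "\<dots> = F (l+1) * F (l+2) + F l * F (l+1)" using F_add[of l "l+1"] by simp
  also have "\<dots> = [:0,1:] * F m ^ 2 + of_nat 2 * (F l * F (l+1))"
    using Suc F_rec[of l] by (simp add: algebra_simps power2_eq_square)
  finally have "F (2*m) - [:0,1:] * F m ^ 2 = of_nat 2 * (F l * F (l+1))" by simp
  then show ?thesis unfolding pc_def by blast
qed

lemma F_two_pow: "pc 2 (F (2^k)) ([:0,1:]^(2^k - 1))"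
proof (induction k)
  case 0 then show ?case by (simp add: pc_refl)
next
  case (Suc k)
  have a: "pc 2 (F (2^Suc k)) ([:0,1:] * F (2^k) ^ 2)" using F_double[of "2^k"] by simp
  have b: "pc 2 ([:0,1:] * F (2^k) ^ 2) ([:0,1:] * ([:0,1:]^(2^k - 1)) ^ 2)"
    using Suc by (intro pc_mult_left pc_power)
  have c: "[:0,1:] * ([:0,1:]^(2^k - 1)) ^ 2 = ([:0,1::int:]^(2^Suc k - 1))"
  proof -
    have e0: "\<And>N::nat. N \<ge> 1 \<Longrightarrow> 1 + (N-1)*2 = 2*N - 1" by arith
    have e: "1 + (2^k - 1) * 2 = 2^Suc k - (1::nat)" using e0[of "2^k"] one_le_power[of "2::nat" k] by simp
    have "[:0,1:] * ([:0,1:]^(2^k - 1)) ^ 2 = [:0,1::int:]^(1 + (2^k - 1) * 2)"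
      by (simp only: power_mult power_add power_one_right)
    then show ?thesis by (simp only: e)
  qed
  show ?case using pc_trans[OF a b] unfolding c .
qed

lemma cancel:
  fixes P G H c :: "int poly"
  assumes p: "prime p" and eq: "P * G = H" and g: "pc p G (c^a)" and h: "pc p H (c^(b+a))"
    and nd: "\<not> [:int p:] dvd c"
  shows "pc p P (c^b)"
proof -
  have "pc p (P * G) (P * c^a)" using g by (rule pc_mult_left)
  then have "pc p (P * c^a) H" using eq pc_sym by metis
  then have "pc p (P * c^a) (c^b * c^a)" using h pc_trans by (metis power_add)
  then have "[:int p:] dvd (P - c^b) * c^a" unfolding pc_poly_iff by (simp add: algebra_simps)
  moreover have pe: "prime_elem [:int p:]" using p by (simp add: prime_elem_const_poly_iff)
  moreover have "\<not> [:int p:] dvd c^a"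
    using pe nd prime_elem_dvd_power by blast
  ultimately have "[:int p:] dvd P - c^b" using prime_elem_dvd_mult_iff by blast
  then show ?thesis unfolding pc_poly_iff .
qed

lemma p_not_dvd_Dp: "prime p \<Longrightarrow> \<not> [:int p:] dvd Dp"
proof
  assume p: "prime p" and d: "[:int p:] dvd Dp"
  then have "int p dvd coeff Dp 2" using const_poly_dvd_iff by blast
  then have "int p dvd 1" by (simp add: Dp_def numeral_2_eq_2)
  then show False using p by (simp add: prime_gt_1_nat)
qed

lemma p_not_dvd_x: "prime p \<Longrightarrow> \<not> [:int p:] dvd [:0,1:]"
proof
  assume p: "prime p" and d: "[:int p:] dvd [:0,1:]"
  then have "int p dvd coeff [:0,1:] 1" using const_poly_dvd_iff by blast
  then have "int p dvd 1" by simp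
  then show False using p by (simp add: prime_gt_1_nat)
qed

lemma odd_arith:
  assumes "odd (p::nat)" "odd q"
  shows "(q * p - 1) div 2 = (q * (p - 1)) div 2 + (q - 1) div 2"
proof -
  obtain a where a: "p = 2*a + 1" using assms(1) oddE by blast
  obtain b where b: "q = 2*b + 1" using assms(2) oddE by blast
  have "q * p - 1 = 2 * (2*a*b + a + b)" unfolding a b by (simp add: algebra_simps)
  moreover have "q * (p - 1) = 2 * (2*a*b + a)" unfolding a b by (simp add: algebra_simps)
  moreover have "q - 1 = 2 * b" unfolding b by simp
  ultimately show ?thesis by simp
qed

theorem mainTheorem11:
  fixes p k :: nat
  assumes "prime p" and "k \<ge> 1"
  shows "if p = 2 \<and> k = 1 then fibotomic 2 = [:0, 1:]
         else (\<forall>i. [coeff (fibotomic (p ^ k)) i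
                     = coeff ([:4, 0, 1:] ^ (totient (p ^ k) div 2)) i] (mod int p))"
proof (cases "p = 2 \<and> k = 1")
  case True
  then have "fibotomic 2 * F 1 = F 2" using fibotomic_prime_power[OF assms] by simp
  then show ?thesis using True by (simp add: numeral_2_eq_2)
next
  case False
  let ?P = "fibotomic (p^k)"
  let ?T = "[:4, 0, 1:] ^ (totient (p ^ k) div 2) :: int poly"
  have eq: "?P * F (p^(k-1)) = F (p^k)" using fibotomic_prime_power[OF assms] .
  have tot: "totient (p^k) = p^(k-1) * (p - 1)" using totient_prime_power[of p k] assms by simp
  have pk: "p^k = p^(k-1) * p" using assms(2) by (metis Suc_diff_le diff_Suc_1 power_Suc2)
  have main: "pc p ?P ?T"
  proof (cases "p = 2")
    case True
    then have k2: "k \<ge> 2" using False assms(2) by auto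
    define j where "j = k - 2"
    have kj: "k = j + 2" using k2 j_def by simp
    have g: "pc 2 (F (2^(k-1))) ([:0,1:]^(2^(k-1) - 1))" by (rule F_two_pow)
    have h: "pc 2 (F (2^k)) ([:0,1:]^(2^(k-1) + (2^(k-1) - 1)))"
    proof -
      have "2^(k-1) + (2^(k-1) - 1) = (2^k - 1::nat)"
        using kj one_le_power[of "2::nat" "j+1"] by simp
      then show ?thesis using F_two_pow[of k] by simp
    qed
    have c1: "pc 2 ?P ([:0,1:]^(2^(k-1)))"
      using cancel[of 2 ?P "F (2^(k-1))" "F (2^k)" "[:0,1:]" "2^(k-1) - 1" "2^(k-1)"] True eq g h
        p_not_dvd_x[of 2] by simp
    have "Dp - [:0,1:]^2 = of_nat 2 * 2"
      unfolding Dp_def by (rule poly_eqI) (simp add: power2_eq_square mult_pCons_left coeff_pCons numeral_poly split: nat.split)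
    then have "pc 2 Dp ([:0,1:]^2)" unfolding pc_def by blast
    then have "pc 2 (Dp^(2^j)) (([:0,1:]^2)^(2^j))" by (rule pc_power)
    moreover have "([:0,1::int:]^2)^(2^j) = [:0,1:]^(2^(k-1))"
      using kj by (simp add: power_mult[symmetric] power_Suc)
    moreover have "totient (p^k) div 2 = 2^j" using tot True kj by simp
    ultimately have "pc 2 ?T ([:0,1:]^(2^(k-1)))" using True by (simp add: Dp_def)
    then have "pc 2 ([:0,1:]^(2^(k-1))) ?T" by (rule pc_sym)
    then show ?thesis using pc_trans[OF c1] True by blast
  next
    case False
    have "p \<ge> 2" using assms(1) prime_ge_2_nat by blast
    then have "p > 2" using False by linarith
    then have op: "odd p" using assms(1) prime_odd_nat by blast
    have g: "pc p (F (p^(k-1))) (Dp^((p^(k-1) - 1) div 2))" using F_odd_cong[OF assms(1) op] .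
    have oa: "(p^(k-1)*p - 1) div 2 = (p^(k-1)*(p-1)) div 2 + (p^(k-1) - 1) div 2"
      using odd_arith[OF op, of "p^(k-1)"] op by simp
    have ar: "(p^k - 1) div 2 = totient (p^k) div 2 + (p^(k-1) - 1) div 2"
      using oa unfolding tot[symmetric] pk[symmetric] .
    have h: "pc p (F (p^k)) (Dp^(totient (p^k) div 2 + (p^(k-1) - 1) div 2))"
      using F_odd_cong[OF assms(1) op, of k] ar by simp
    have "pc p ?P (Dp^(totient (p^k) div 2))"
      using cancel[OF assms(1) eq g h p_not_dvd_Dp[OF assms(1)]] .
    then show ?thesis by (simp add: Dp_def)
  qed
  have "\<forall>i. [coeff ?P i = coeff ?T i] (mod int p)"
  proof
    fix i
    have "[:int p:] dvd ?P - ?T" using main pc_poly_iff by blast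
    then have "int p dvd coeff (?P - ?T) i" using const_poly_dvd_iff by blast
    then show "[coeff ?P i = coeff ?T i] (mod int p)" by (simp add: cong_iff_dvd_diff)
  qed
  then show ?thesis unfolding if_not_P[OF False] .
qed


end
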